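(* Let $\varphi:\mathbb{R}^n\to\mathbb{R}$ be of class $\mathcal C^{1,1}$ on a neighborhood of $\bar x$, where $\bar x$ is a tilt-stable local minimizer of $\varphi$ with modulus $\kappa>0$, and suppose there is $\delta>0$ such that for every $(x,v)\in\operatorname{gph}\nabla\varphi\cap\mathbb B_\delta(\bar x,0)$ the function $\varphi$ is twice epi-differentiable at $x$ for $v=\nabla\varphi(x)$. Then for every $x$ sufficiently close to $\bar x$, the problem $$\text{minimize}\ \ \varphi(x)+\langle\nabla\varphi(x),w\rangle+\tfrac12{\rm d}^2\varphi(x,\nabla\varphi(x))(w)\quad\text{over } w\in\mathbb{R}^n$$ admits a unique optimal solution.
   Context: $\mathcal C^{1,1}$ near $\bar x$: differentiable with locally Lipschitz gradient near $\bar x$. Second subderivative: ${\rm d}^2\varphi(x,v)(w)=\liminf_{t\downarrow0,w'\to w}\Delta_t^2\varphi(x,v)(w')$, where $\Delta_t^2\varphi(x,v)(w')=\frac{\varphi(x+tw')-\varphi(x)-t\langle v,w'\rangle}{t^2/2}$. $\varphi$ is twice epi-differentiable at $x$ for $v$ if for every $w$ and every $t_k\downarrow0$ there exists $w_k\to w$ with $\Delta_{t_k}^2\varphi(x,v)(w_k)\to{\rm d}^2\varphi(x,v)(w)$. $\bar x$ is a tilt-stable local minimizer of $\varphi$ with modulus $\kappa>0$ if for some $\gamma>0$ the mapping $M_\gamma(v)=\operatorname{argmin}\{\varphi(x)-\langle v,x\rangle:x\in\mathbb B_\gamma(\bar x)\}$ is single-valued and Lipschitz continuous with constant $\kappa$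 on a neighborhood of $0$, with $M_\gamma(0)=\{\bar x\}$. *)

theory Defs
  imports "HOL-Analysis.Analysis"
begin

definition grad :: "('a::real_inner \<Rightarrow> real) \<Rightarrow> 'a \<Rightarrow> 'a" where
  "grad f x = (SOME g. GDERIV f x :> g)"

definition C11_near :: "('a::euclidean_space \<Rightarrow> real) \<Rightarrow> 'a \<Rightarrow> bool" where
  "C11_near f xb \<longleftrightarrow> (\<exists>U. open U \<and> xb \<in> U \<and>
     (\<forall>x\<in>U. f differentiable (at x)) \<and>
     (\<forall>x\<in>U. \<exists>e>0. \<exists>L. L-lipschitz_on (ball x e \<inter> U) (grad f)))"

definition sdq :: "('a::real_inner \<Rightarrow> real) \<Rightarrow> 'a \<Rightarrow> 'a \<Rightarrow> real \<Rightarrow> 'a \<Rightarrow> real" where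
  "sdq f x v t w = (f (x + t *\<^sub>R w) - f x - t * inner v w) / (t\<^sup>2 / 2)"

definition second_subderiv :: "('a::real_inner \<Rightarrow> real) \<Rightarrow> 'a \<Rightarrow> 'a \<Rightarrow> 'a \<Rightarrow> ereal" where
  "second_subderiv f x v w =
     Liminf (at (0, w) within ({0<..} \<times> UNIV)) (\<lambda>(t, w'). ereal (sdq f x v t w'))"

definition twice_epi_diff :: "('a::real_inner \<Rightarrow> real) \<Rightarrow> 'a \<Rightarrow> 'a \<Rightarrow> bool" where
  "twice_epi_diff f x v \<longleftrightarrow>
     (\<forall>w. \<forall>t::nat \<Rightarrow> real. (\<forall>k. t k > 0) \<and> t \<longlonglongrightarrow> 0 \<longrightarrow>
        (\<exists>wk. wk \<longlonglongrightarrow> w \<and>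
           (\<lambda>k. ereal (sdq f x v (t k) (wk k))) \<longlonglongrightarrow> second_subderiv f x v w))"

definition tilt_argmin :: "('a::real_inner \<Rightarrow> real) \<Rightarrow> 'a \<Rightarrow> real \<Rightarrow> 'a \<Rightarrow> 'a set" where
  "tilt_argmin f xb \<gamma> v =
     {x \<in> cball xb \<gamma>. \<forall>y\<in>cball xb \<gamma>. f x - inner v x \<le> f y - inner v y}"

definition tilt_stable :: "('a::real_inner \<Rightarrow> real) \<Rightarrow> 'a \<Rightarrow> real \<Rightarrow> bool" where
  "tilt_stable f xb \<kappa> \<longleftrightarrow> (\<exists>\<gamma>>0. \<exists>\<eta>>0.
     (\<forall>v\<in>ball 0 \<eta>. \<exists>x. tilt_argmin f xb \<gamma> v = {x}) \<and>
     (\<forall>v1\<in>ball 0 \<eta>. \<forall>v2\<in>ball 0 \<eta>. \<forall>x1 x2.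
        tilt_argmin f xb \<gamma> v1 = {x1} \<and> tilt_argmin f xb \<gamma> v2 = {x2} \<longrightarrow>
        norm (x1 - x2) \<le> \<kappa> * norm (v1 - v2)) \<and>
     tilt_argmin f xb \<gamma> 0 = {xb})"

end

theory Submission
  imports Defs "HOL-Homology.Invariance_of_Domain"
begin


lemma linear_inner_repr:
  fixes f :: "'a::euclidean_space \<Rightarrow> real"
  assumes "linear f"
  shows "f = (\<lambda>h. inner h (\<Sum>b\<in>Basis. f b *\<^sub>R b))"
proof
  fix h
  have "inner h (\<Sum>b\<in>Basis. f b *\<^sub>R b) = (\<Sum>b\<in>Basis. (h \<bullet> b) * f b)"
    by (simp add: inner_sum_right mult.commute)
  also have "\<dots> = f (\<Sum>b\<in>Basis. (h \<bullet> b) *\<^sub>R b)"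
    using assms by (simp add: linear_sum linear_scale)
  also have "\<dots> = f h" by (simp add: euclidean_representation)
  finally show "f h = inner h (\<Sum>b\<in>Basis. f b *\<^sub>R b)" by simp
qed

lemma grad_has_derivative:
  fixes f :: "'a::euclidean_space \<Rightarrow> real"
  assumes "f differentiable (at x)"
  shows "(f has_derivative (\<lambda>h. inner h (grad f x))) (at x)"
proof -
  obtain f' where d: "(f has_derivative f') (at x)" using assms by (auto simp: differentiable_def)
  then have "linear f'" using has_derivative_linear by blast
  then have "GDERIV f x :> (\<Sum>b\<in>Basis. f' b *\<^sub>R b)"
    using d linear_inner_repr[of f'] by (simp add: gderiv_def) 
  then have "GDERIV f x :> grad f x" unfolding grad_def by (rule someI)
  then show ?thesis by (simp add: gderiv_def)
qed

lemma Liminf_le_finer: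
  assumes "F' \<le> F"
  shows "Liminf F f \<le> Liminf F' f"
  unfolding Liminf_def
  apply (rule SUP_subset_mono)
  using assms by (auto simp: le_filter_def)

lemma Liminf_le_seq:
  assumes "filterlim s F sequentially"
  shows "Liminf F f \<le> Liminf sequentially (\<lambda>k. f (s k))"
proof -
  have "Liminf F f \<le> Liminf (filtermap s sequentially) f"
    using assms by (intro Liminf_le_finer) (simp add: filterlim_def)
  also have "\<dots> \<le> Liminf sequentially (\<lambda>k. f (s k))" by (rule Liminf_filtermap_le)
  finally show ?thesis .
qed



lemma coco:
  fixes M :: "'a::real_inner \<Rightarrow> 'a" and \<phi> :: "'a \<Rightarrow> real"
  assumes kp: "\<kappa> > 0"
    and mn: "\<And>u y. u \<in> ball 0 \<eta> \<Longrightarrow> y \<in> C \<Longrightarrow> \<phi> (M u) - inner u (M u) \<le> \<phi> y - inner u y"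
    and MC: "\<And>u. u \<in> ball 0 \<eta> \<Longrightarrow> M u \<in> C"
    and lip: "\<And>u u'. u \<in> ball 0 \<eta> \<Longrightarrow> u' \<in> ball 0 \<eta> \<Longrightarrow> norm (M u - M u') \<le> \<kappa> * norm (u - u')"
    and u: "norm u < \<eta>/3" and v: "norm v < \<eta>/3"
  shows "inner (M u - M v) (u - v) \<ge> (norm (M u - M v))\<^sup>2 / (2*\<kappa>)"
proof -
  define g where "g a = inner a (M a) - \<phi> (M a)" for a
  have L: "g b \<ge> g a + inner (b - a) (M a)" if "a \<in> ball 0 \<eta>" "b \<in> ball 0 \<eta>" for a b
    using mn[OF that(2) MC[OF that(1)]] by (simp add: g_def inner_diff_left)
  have U: "g b \<le> g a + inner (b - a) (M a) + \<kappa> * (norm (b - a))\<^sup>2" if "a \<in> ball 0 \<eta>" "b \<in> ball 0 \<eta>" for a b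
  proof -
    have "g a \<ge> g b + inner (a - b) (M b)" using L that by blast
    then have "g b \<le> g a + inner (b - a) (M a) + inner (b - a) (M b - M a)"
      by (simp add: inner_diff_right inner_diff_left algebra_simps)
    also have "inner (b - a) (M b - M a) \<le> norm (b - a) * norm (M b - M a)"
      by (rule norm_cauchy_schwarz)
    also have "\<dots> \<le> norm (b - a) * (\<kappa> * norm (b - a))"
      using lip[OF that(2,1)] by (simp add: mult_left_mono)
    finally show ?thesis by (simp add: power2_eq_square algebra_simps)
  qed
  define s where "s = 1 / (2*\<kappa>)"
  have s0: "s > 0" using kp by (simp add: s_def)
  have key: "g q - inner q (M q) \<le> g p - inner p (M q) - (norm (M p - M q))\<^sup>2 / (4*\<kappa>)"
    if p: "norm p < \<eta>/3" and q: "norm q < \<eta>/3" for p q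
  proof -
    define d where "d = M p - M q"
    define w where "w = p - s *\<^sub>R d"
    have "norm p < \<eta>" "norm q < \<eta>" using p q norm_ge_zero[of p] norm_ge_zero[of q] by linarith+
    then have pb: "p \<in> ball 0 \<eta>" "q \<in> ball 0 \<eta>" by auto
    have "norm d \<le> \<kappa> * norm (p - q)" using lip[OF pb] by (simp add: d_def)
    then have "s * norm d \<le> norm (p - q) / 2" using kp by (simp add: s_def field_simps)
    also have "norm (p - q) \<le> norm p + norm q" by (rule norm_triangle_ineq4)
    finally have sd: "2 * (s * norm d) \<le> norm p + norm q" by simp
    have p3: "3 * norm p < \<eta>" "3 * norm q < \<eta>" using p q by simp_all
    have "norm w \<le> norm p + norm (s *\<^sub>R d)" unfolding w_def by (rule norm_triangle_ineq4)
    also have "norm (s *\<^sub>R d) = s * norm d" using s0 by simp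
    finally have "norm w < \<eta>" using sd p3 norm_ge_zero[of p] by linarith
    then have wb: "w \<in> ball 0 \<eta>" by simp
    have "g w \<ge> g q + inner (w - q) (M q)" using L pb(2) wb by blast
    moreover have "g w \<le> g p + inner (w - p) (M p) + \<kappa> * (norm (w - p))\<^sup>2" using U pb(1) wb by blast
    ultimately have c1: "g q - inner q (M q) \<le> g p - inner p (M q) + inner (w - p) (M p - M q) + \<kappa> * (norm (w - p))\<^sup>2"
      unfolding inner_diff_left inner_diff_right by linarith
    have e1: "inner (w - p) (M p - M q) = - s * (norm d)\<^sup>2"
      by (simp add: w_def d_def power2_norm_eq_inner)
    have e2: "\<kappa> * (norm (w - p))\<^sup>2 = \<kappa> * s\<^sup>2 * (norm d)\<^sup>2"
      using s0 by (simp add: w_def power2_eq_square)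
    have e3: "- s * (norm d)\<^sup>2 + \<kappa> * s\<^sup>2 * (norm d)\<^sup>2 = - (norm d)\<^sup>2 / (4*\<kappa>)"
      using kp by (simp add: s_def power2_eq_square field_simps)
    show ?thesis using c1 e1 e2 e3 unfolding d_def by linarith
  qed
  have k1: "g v - inner v (M v) \<le> g u - inner u (M v) - (norm (M u - M v))\<^sup>2 / (4*\<kappa>)" using key u v by blast
  have k2: "g u - inner u (M u) \<le> g v - inner v (M u) - (norm (M v - M u))\<^sup>2 / (4*\<kappa>)" using key u v by blast
  have "norm (M v - M u) = norm (M u - M v)" by (rule norm_minus_commute)
  with k1 k2 have "(norm (M u - M v))\<^sup>2 / (2*\<kappa>) \<le> inner u (M u) + inner v (M v) - inner u (M v) - inner v (M u)"
    by (simp add: field_simps)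
  also have "\<dots> = inner (M u - M v) (u - v)" by (simp add: inner_diff_left inner_diff_right inner_commute)
  finally show ?thesis .
qed



lemma mvt_line:
  fixes f :: "'a::real_inner \<Rightarrow> real"
  assumes der: "\<And>p. p \<in> closed_segment y z \<Longrightarrow> (f has_derivative (\<lambda>h. inner h (G p))) (at p)"
  shows "\<exists>s\<in>{0<..<1}. f z - f y = inner (z - y) (G (y + s *\<^sub>R (z - y)))"
proof -
  define F where "F s = f (y + s *\<^sub>R (z - y))" for s :: real
  have seg: "y + s *\<^sub>R (z - y) \<in> closed_segment y z" if "0 \<le> s" "s \<le> 1" for s
    unfolding closed_segment_def using that
    by (intro CollectI exI[of _ s]) (simp add: algebra_simps)
  have "\<exists>s\<in>{0<..<1}. F 1 - F 0 = (\<lambda>t. inner (t *\<^sub>R (z - y)) (G (y + s *\<^sub>R (z - y)))) (1 - 0)"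
  proof (rule mvt_simple)
    fix s :: real assume "0 \<le> s" "s \<le> 1"
    have d1: "((\<lambda>s. y + s *\<^sub>R (z - y)) has_derivative (\<lambda>t. t *\<^sub>R (z - y))) (at s within {0..1})"
      by (auto intro!: derivative_eq_intros)
    show "(F has_derivative (\<lambda>t. inner (t *\<^sub>R (z - y)) (G (y + s *\<^sub>R (z - y))))) (at s within {0..1})"
      unfolding F_def using has_derivative_compose[OF d1 der[OF seg[OF \<open>0 \<le> s\<close> \<open>s \<le> 1\<close>]]] by simp
  qed simp
  then show ?thesis by (simp add: F_def)
qed

lemma strong_tangent:
  fixes \<phi> :: "'a::real_inner \<Rightarrow> real"
  assumes cvx: "convex S" and y: "y \<in> S" and z: "z \<in> S"
    and der: "\<And>p. p \<in> S \<Longrightarrow> (\<phi> has_derivative (\<lambda>h. inner h (g p))) (at p)"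
    and mono: "\<And>a b. a \<in> S \<Longrightarrow> b \<in> S \<Longrightarrow> inner (g a - g b) (a - b) \<ge> c * (norm (a - b))\<^sup>2"
  shows "\<phi> z \<ge> \<phi> y + inner (g y) (z - y) + c/2 * (norm (z - y))\<^sup>2"
proof -
  define \<psi> where "\<psi> p = \<phi> p - c/2 * inner p p" for p
  define G where "G p = g p - c *\<^sub>R p" for p
  have segS: "closed_segment y z \<subseteq> S" using cvx y z by (simp add: closed_segment_subset)
  have dpsi: "(\<psi> has_derivative (\<lambda>h. inner h (G p))) (at p)" if "p \<in> S" for p
  proof -
    have "((\<lambda>p. inner p p) has_derivative (\<lambda>h. inner p h + inner h p)) (at p)"
      by (rule has_derivative_inner[OF has_derivative_ident has_derivative_ident])
    then have "((\<lambda>p. c/2 * inner p p) has_derivative (\<lambda>h. c/2 * (inner p h + inner h p))) (at p)"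
      by (rule has_derivative_mult_right)
    from has_derivative_diff[OF der[OF that] this]
    show ?thesis unfolding \<psi>_def G_def
      by (simp add: inner_diff_right inner_commute[of p] algebra_simps)
  qed
  obtain s where s: "s \<in> {0<..<1}" and eq: "\<psi> z - \<psi> y = inner (z - y) (G (y + s *\<^sub>R (z - y)))"
    using mvt_line[of y z \<psi> G] dpsi segS by blast
  define p where "p = y + s *\<^sub>R (z - y)"
  have pS: "p \<in> S" using segS s unfolding p_def closed_segment_def
    by (auto intro!: exI[of _ s] simp: algebra_simps)
  have "inner (g p - g y) (p - y) \<ge> c * (norm (p - y))\<^sup>2" using mono[OF pS y] .
  then have "inner (G p - G y) (p - y) \<ge> 0"
    by (simp add: G_def inner_diff_left power2_norm_eq_inner right_diff_distrib)
  then have "s * inner (G p - G y) (z - y) \<ge> 0" by (simp add: p_def inner_commute)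
  then have h: "inner (G p - G y) (z - y) \<ge> 0" using s by (simp add: zero_le_mult_iff)
  then have h2: "inner (G y) (z - y) \<le> inner (G p) (z - y)" by (simp add: inner_diff_left)
  then have "inner (z - y) (G p) \<ge> inner (z - y) (G y)" by (metis inner_commute)
  with eq have "\<psi> z - \<psi> y \<ge> inner (z - y) (G y)" by (simp add: p_def)
  then have F: "\<phi> z - c/2 * inner z z - (\<phi> y - c/2 * inner y y) \<ge> inner (z - y) (G y)"
    by (simp add: \<psi>_def)
  have A: "inner (z - y) (G y) = inner (g y) (z - y) - c * inner (z - y) y"
    by (simp add: G_def inner_diff_right inner_commute)
  have B: "(norm (z - y))\<^sup>2 = inner z z - 2 * inner z y + inner y y"
    by (simp add: power2_norm_eq_inner inner_diff_left inner_diff_right inner_commute)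
  have B': "c/2 * (norm (z - y))\<^sup>2 = c/2 * inner z z - c * inner z y + c/2 * inner y y"
    unfolding B by (simp add: algebra_simps)
  have C: "c * inner (z - y) y = c * inner z y - c * inner y y"
    by (simp add: inner_diff_left algebra_simps)
  show ?thesis using F A B' C by linarith
qed



lemma strong_conv:
  fixes \<phi> :: "'a::real_inner \<Rightarrow> real"
  assumes cvx: "convex S" and a: "a \<in> S" and b: "b \<in> S" and l: "0 \<le> l" "l \<le> 1"
    and der: "\<And>p. p \<in> S \<Longrightarrow> (\<phi> has_derivative (\<lambda>h. inner h (g p))) (at p)"
    and mono: "\<And>a b. a \<in> S \<Longrightarrow> b \<in> S \<Longrightarrow> inner (g a - g b) (a - b) \<ge> c * (norm (a - b))\<^sup>2"
  shows "\<phi> (l *\<^sub>R a + (1 - l) *\<^sub>R b) \<le> l * \<phi> a + (1 - l) * \<phi> b - c/2 * l * (1 - l) * (norm (a - b))\<^sup>2"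
proof -
  define m where "m = l *\<^sub>R a + (1 - l) *\<^sub>R b"
  have mS: "m \<in> S" unfolding m_def using cvx a b l by (simp add: convex_def)
  define X where "X = inner (g m) (a - b)"
  define N where "N = (norm (a - b))\<^sup>2"
  have am: "a - m = (1 - l) *\<^sub>R (a - b)" by (simp add: m_def algebra_simps)
  have bm: "b - m = (- l) *\<^sub>R (a - b)" by (simp add: m_def algebra_simps)
  have T1: "\<phi> a \<ge> \<phi> m + (1 - l) * X + c/2 * (1 - l)\<^sup>2 * N"
    using strong_tangent[OF cvx mS a der mono] unfolding am X_def N_def
    by (simp add: power_mult_distrib)
  have T2: "\<phi> b \<ge> \<phi> m + (- l) * X + c/2 * l\<^sup>2 * N"
    using strong_tangent[OF cvx mS b der mono] unfolding bm X_def N_def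
    by (simp add: power_mult_distrib)
  have "l * \<phi> a + (1 - l) * \<phi> b \<ge> l * (\<phi> m + (1 - l) * X + c/2 * (1 - l)\<^sup>2 * N) + (1 - l) * (\<phi> m + (- l) * X + c/2 * l\<^sup>2 * N)"
    using l T1 T2 by (intro add_mono mult_left_mono) auto
  also have "l * (\<phi> m + (1 - l) * X + c/2 * (1 - l)\<^sup>2 * N) + (1 - l) * (\<phi> m + (- l) * X + c/2 * l\<^sup>2 * N)
       = \<phi> m + c/2 * l * (1 - l) * N"
    by (simp add: field_simps power2_eq_square)
  finally show ?thesis unfolding m_def N_def by linarith
qed



locale subprob =
  fixes \<phi> :: "'a::euclidean_space \<Rightarrow> real" and g :: "'a \<Rightarrow> 'a" and S x c L e
  assumes opn: "open S" and cvx: "convex S" and xS: "x \<in> S"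
    and der: "\<And>p. p \<in> S \<Longrightarrow> (\<phi> has_derivative (\<lambda>h. inner h (g p))) (at p)"
    and mono: "\<And>a b. a \<in> S \<Longrightarrow> b \<in> S \<Longrightarrow> inner (g a - g b) (a - b) \<ge> c * (norm (a - b))\<^sup>2"
    and c0: "c > 0" and e0: "e > 0" and L0: "L \<ge> 0"
    and lip: "\<And>p. p \<in> ball x e \<Longrightarrow> norm (g p - g x) \<le> L * norm (p - x)"
begin

abbreviation "q \<equiv> sdq \<phi> x (g x)"

lemma sdq_lower:
  assumes t: "t > 0" and w: "x + t *\<^sub>R w \<in> S"
  shows "c * (norm w)\<^sup>2 \<le> q t w"
proof -
  have "\<phi> (x + t *\<^sub>R w) \<ge> \<phi> x + inner (g x) ((x + t *\<^sub>R w) - x) + c/2 * (norm ((x + t *\<^sub>R w) - x))\<^sup>2"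
    by (rule strong_tangent[OF cvx xS w der mono])
  then have "\<phi> (x + t *\<^sub>R w) - \<phi> x - t * inner (g x) w \<ge> c * (norm w)\<^sup>2 * (t\<^sup>2 / 2)"
    using t by (simp add: power_mult_distrib algebra_simps)
  then show ?thesis unfolding sdq_def using t by (simp add: pos_le_divide_eq)
qed

lemma sdq_upper:
  assumes t: "t > 0" and w: "x + t *\<^sub>R w \<in> S" and te: "t * norm w < e"
  shows "q t w \<le> 2 * L * (norm w)\<^sup>2"
proof -
  have segS: "closed_segment x (x + t *\<^sub>R w) \<subseteq> S" using cvx xS w by (simp add: closed_segment_subset)
  obtain s where s: "s \<in> {0<..<1}" and eq: "\<phi> (x + t *\<^sub>R w) - \<phi> x = inner ((x + t *\<^sub>R w) - x) (g (x + s *\<^sub>R ((x + t *\<^sub>R w) - x)))"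
    using mvt_line[of x "x + t *\<^sub>R w" \<phi> g] der segS by blast
  define p where "p = x + (s * t) *\<^sub>R w"
  have eq2: "\<phi> (x + t *\<^sub>R w) - \<phi> x - t * inner (g x) w = t * inner w (g p - g x)"
    using eq by (simp add: p_def inner_diff_right inner_commute algebra_simps)
  have pd: "norm (p - x) = s * t * norm w" using s t by (simp add: p_def)
  have "s * t * norm w \<le> t * norm w" using s t by (simp add: mult_right_mono)
  then have "p \<in> ball x e" using pd te by (simp add: dist_norm norm_minus_commute)
  then have gl: "norm (g p - g x) \<le> L * (s * t * norm w)" using lip pd by metis
  have "inner w (g p - g x) \<le> norm w * norm (g p - g x)" by (rule norm_cauchy_schwarz)
  also have "\<dots> \<le> norm w * (L * (s * t * norm w))" using gl by (simp add: mult_left_mono)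
  also have "\<dots> \<le> norm w * (L * (t * norm w))"
    using s t L0 by (intro mult_left_mono) (auto intro!: mult_right_mono mult_left_le_one_le)
  finally have "t * inner w (g p - g x) \<le> t * (norm w * (L * (t * norm w)))" using t by simp
  then have "\<phi> (x + t *\<^sub>R w) - \<phi> x - t * inner (g x) w \<le> (2 * L * (norm w)\<^sup>2) * (t\<^sup>2 / 2)"
    using eq2 by (simp add: power2_eq_square algebra_simps)
  then show ?thesis unfolding sdq_def using t by (simp add: pos_divide_le_eq)
qed

lemma sdq_conv:
  assumes t: "t > 0" and a: "x + t *\<^sub>R a \<in> S" and b: "x + t *\<^sub>R b \<in> S" and l: "0 \<le> l" "l \<le> 1"
  shows "q t (l *\<^sub>R a + (1 - l) *\<^sub>R b) \<le> l * q t a + (1 - l) * q t b - c * l * (1 - l) * (norm (a - b))\<^sup>2"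
proof -
  define A where "A = x + t *\<^sub>R a"
  define B where "B = x + t *\<^sub>R b"
  define m where "m = l *\<^sub>R a + (1 - l) *\<^sub>R b"
  have Am: "l *\<^sub>R A + (1 - l) *\<^sub>R B = x + t *\<^sub>R m" by (simp add: A_def B_def m_def algebra_simps)
  have AB: "(norm (A - B))\<^sup>2 = t\<^sup>2 * (norm (a - b))\<^sup>2"
  proof -
    have "A - B = t *\<^sub>R (a - b)" by (simp add: A_def B_def algebra_simps)
    then show ?thesis using t by (simp add: power_mult_distrib)
  qed
  have sc: "\<phi> (x + t *\<^sub>R m) \<le> l * \<phi> A + (1 - l) * \<phi> B - c/2 * l * (1 - l) * (t\<^sup>2 * (norm (a - b))\<^sup>2)"
    using strong_conv[OF cvx _ _ l der mono, of A B] a b Am AB by (simp add: A_def B_def)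
  have lin: "t * inner (g x) m = l * (t * inner (g x) a) + (1 - l) * (t * inner (g x) b)"
    by (simp add: m_def inner_add_right algebra_simps)
  define Qa where "Qa = \<phi> A - \<phi> x - t * inner (g x) a"
  define Qb where "Qb = \<phi> B - \<phi> x - t * inner (g x) b"
  define Qm where "Qm = \<phi> (x + t *\<^sub>R m) - \<phi> x - t * inner (g x) m"
  have "Qm \<le> l * Qa + (1 - l) * Qb - c/2 * l * (1 - l) * (t\<^sup>2 * (norm (a - b))\<^sup>2)"
    using sc lin unfolding Qa_def Qb_def Qm_def by (simp add: algebra_simps)
  then have "Qm / (t\<^sup>2/2) \<le> (l * Qa + (1 - l) * Qb - c/2 * l * (1 - l) * (t\<^sup>2 * (norm (a - b))\<^sup>2)) / (t\<^sup>2/2)"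
    using t by (intro divide_right_mono) auto
  also have "\<dots> = l * (Qa / (t\<^sup>2/2)) + (1 - l) * (Qb / (t\<^sup>2/2)) - c * l * (1 - l) * (norm (a - b))\<^sup>2"
    using t by (simp add: field_simps)
  finally show ?thesis unfolding sdq_def Qa_def Qb_def Qm_def m_def A_def B_def .
qed

end



context subprob
begin

definition Fw :: "'a \<Rightarrow> (real \<times> 'a) filter" where
  "Fw w = at (0, w) within ({0<..} \<times> UNIV)"

lemma ss_def: "second_subderiv \<phi> x (g x) w = Liminf (Fw w) (\<lambda>p. ereal (q (fst p) (snd p)))"
  unfolding second_subderiv_def Fw_def by (simp add: case_prod_beta')

lemma seq_lim:
  assumes "\<And>k. tk k > 0" "tk \<longlonglongrightarrow> 0" "wk \<longlonglongrightarrow> w"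
  shows "filterlim (\<lambda>k. (tk k, wk k)) (Fw w) sequentially"
proof -
  have "\<forall>k. tk k \<noteq> 0" using assms(1) by (metis less_irrefl)
  then show ?thesis unfolding Fw_def filterlim_at using assms
    by (auto intro!: tendsto_Pair always_eventually)
qed

lemma Fw_nontriv: "Fw w \<noteq> bot"
proof
  assume b: "Fw w = bot"
  have "filterlim (\<lambda>k. (inverse (real (Suc k)), w)) (Fw w) sequentially"
    by (rule seq_lim[OF _ LIMSEQ_inverse_real_of_nat]) auto
  then have "eventually (\<lambda>k. False) sequentially"
    unfolding filterlim_iff b using eventually_bot[of "\<lambda>_. False"] by blast
  then show False by simp
qed

lemma ev_good: "\<forall>\<^sub>F p in Fw w. fst p > 0 \<and> x + fst p *\<^sub>R snd p \<in> S \<and> fst p * norm (snd p) < e"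
proof -
  obtain r where r: "r > 0" "ball x r \<subseteq> S" using opn xS open_contains_ball by blast
  define m where "m = min r e"
  have m0: "m > 0" using r e0 by (simp add: m_def)
  define d where "d = min 1 (m / (norm w + 2))"
  have "norm w + 2 > 0" by (simp add: add_nonneg_pos)
  then have d0: "d > 0" using m0 by (simp add: d_def divide_pos_pos)
  show ?thesis unfolding Fw_def eventually_at
  proof (rule exI[of _ d], rule conjI[OF d0], intro ballI impI)
    fix p :: "real \<times> 'a" assume pS: "p \<in> {0<..} \<times> UNIV" and pd: "p \<noteq> (0, w) \<and> dist p (0, w) < d"
    obtain t w' where p: "p = (t, w')" by fastforce
    have t0: "t > 0" using pS p by auto
    have "dist t 0 < d" using dist_fst_le[of p "(0,w)"] pd p by simp
    then have td: "t < d" using t0 by simp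
    have "dist w' w < d" using dist_snd_le[of p "(0,w)"] pd p by simp
    then have "norm w' < norm w + 1" using norm_triangle_ineq2[of w' w] d_def
      by (simp add: dist_norm)
    then have "t * norm w' \<le> t * (norm w + 1)" using t0 by simp
    also have "\<dots> < d * (norm w + 2)" using td t0
      by (intro mult_strict_mono) auto
    also have "\<dots> \<le> m" unfolding d_def
    proof -
      have "norm w + 2 > 0" by (simp add: add_nonneg_pos)
      then show "min 1 (m / (norm w + 2)) * (norm w + 2) \<le> m"
        by (metis min.cobounded2 pos_le_divide_eq)
    qed
    finally have tm: "t * norm w' < m" .
    then have "x + t *\<^sub>R w' \<in> ball x r" using t0 by (simp add: dist_norm m_def)
    then show "fst p > 0 \<and> x + fst p *\<^sub>R snd p \<in> S \<and> fst p * norm (snd p) < e"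
      using t0 r tm p by (auto simp: m_def)
  qed
qed

lemma snd_tendsto: "((\<lambda>p. snd p) \<longlongrightarrow> w) (Fw w)"
proof -
  have "((\<lambda>p. p) \<longlongrightarrow> (0, w)) (Fw w)" unfolding Fw_def by (rule tendsto_ident_at)
  from tendsto_snd[OF this] show ?thesis by simp
qed

lemma ss_lower: "ereal (c * (norm w)\<^sup>2) \<le> second_subderiv \<phi> x (g x) w"
proof -
  have "((\<lambda>p. ereal (c * (norm (snd p))\<^sup>2)) \<longlongrightarrow> ereal (c * (norm w)\<^sup>2)) (Fw w)"
    unfolding lim_ereal by (intro tendsto_intros snd_tendsto)
  then have "Liminf (Fw w) (\<lambda>p. ereal (c * (norm (snd p))\<^sup>2)) = ereal (c * (norm w)\<^sup>2)"
    using Fw_nontriv by (intro lim_imp_Liminf) auto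
  moreover have "Liminf (Fw w) (\<lambda>p. ereal (c * (norm (snd p))\<^sup>2)) \<le> Liminf (Fw w) (\<lambda>p. ereal (q (fst p) (snd p)))"
    by (rule Liminf_mono) (use ev_good in \<open>eventually_elim, auto intro: sdq_lower\<close>)
  ultimately show ?thesis unfolding ss_def by simp
qed

lemma ss_upper: "second_subderiv \<phi> x (g x) w \<le> ereal (2 * L * (norm w)\<^sup>2)"
proof -
  have "((\<lambda>p. ereal (2 * L * (norm (snd p))\<^sup>2)) \<longlongrightarrow> ereal (2 * L * (norm w)\<^sup>2)) (Fw w)"
    unfolding lim_ereal by (intro tendsto_intros snd_tendsto)
  then have "Liminf (Fw w) (\<lambda>p. ereal (2 * L * (norm (snd p))\<^sup>2)) = ereal (2 * L * (norm w)\<^sup>2)"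
    using Fw_nontriv by (intro lim_imp_Liminf) auto
  moreover have "Liminf (Fw w) (\<lambda>p. ereal (q (fst p) (snd p))) \<le> Liminf (Fw w) (\<lambda>p. ereal (2 * L * (norm (snd p))\<^sup>2))"
    by (rule Liminf_mono) (use ev_good in \<open>eventually_elim, auto intro: sdq_upper\<close>)
  ultimately show ?thesis unfolding ss_def by simp
qed

end



context subprob
begin

definition D :: "'a \<Rightarrow> real" where "D w = real_of_ereal (second_subderiv \<phi> x (g x) w)"

lemma ss_eq: "second_subderiv \<phi> x (g x) w = ereal (D w)"
proof -
  have "second_subderiv \<phi> x (g x) w \<noteq> \<infinity>" "second_subderiv \<phi> x (g x) w \<noteq> -\<infinity>"
    using ss_lower[of w] ss_upper[of w] by auto
  then show ?thesis unfolding D_def by (cases "second_subderiv \<phi> x (g x) w") auto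
qed

lemma D_lower: "c * (norm w)\<^sup>2 \<le> D w" using ss_lower[of w] ss_eq[of w] by simp
lemma D_upper: "D w \<le> 2 * L * (norm w)\<^sup>2" using ss_upper[of w] ss_eq[of w] by simp

end

locale subprob2 = subprob +
  assumes epi: "twice_epi_diff \<phi> x (g x)"
begin

lemma D_conv:
  assumes l: "0 \<le> l" "l \<le> 1"
  shows "D (l *\<^sub>R a + (1 - l) *\<^sub>R b) \<le> l * D a + (1 - l) * D b - c * l * (1 - l) * (norm (a - b))\<^sup>2"
proof -
  define tk where "tk k = inverse (real (Suc k))" for k
  have tk0: "\<And>k. tk k > 0" by (simp add: tk_def)
  have tkl: "tk \<longlonglongrightarrow> 0" unfolding tk_def by (rule LIMSEQ_inverse_real_of_nat)
  obtain ak where ak: "ak \<longlonglongrightarrow> a" and aq: "(\<lambda>k. ereal (q (tk k) (ak k))) \<longlonglongrightarrow> second_subderiv \<phi> x (g x) a"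
    using epi[unfolded twice_epi_diff_def, rule_format, of tk a] tk0 tkl by blast
  obtain bk where bk: "bk \<longlonglongrightarrow> b" and bq: "(\<lambda>k. ereal (q (tk k) (bk k))) \<longlonglongrightarrow> second_subderiv \<phi> x (g x) b"
    using epi[unfolded twice_epi_diff_def, rule_format, of tk b] tk0 tkl by blast
  have aq': "(\<lambda>k. q (tk k) (ak k)) \<longlonglongrightarrow> D a" using aq by (simp add: ss_eq)
  have bq': "(\<lambda>k. q (tk k) (bk k)) \<longlonglongrightarrow> D b" using bq by (simp add: ss_eq)
  define m where "m = l *\<^sub>R a + (1 - l) *\<^sub>R b"
  define mk where "mk k = l *\<^sub>R ak k + (1 - l) *\<^sub>R bk k" for k
  have mk: "mk \<longlonglongrightarrow> m" unfolding mk_def m_def by (intro tendsto_intros ak bk)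
  define R where "R = l * D a + (1 - l) * D b - c * l * (1 - l) * (norm (a - b))\<^sup>2"
  define Rk where "Rk k = l * q (tk k) (ak k) + (1 - l) * q (tk k) (bk k) - c * l * (1 - l) * (norm (ak k - bk k))\<^sup>2" for k
  have Rk: "Rk \<longlonglongrightarrow> R" unfolding Rk_def R_def by (intro tendsto_intros aq' bq' ak bk)
  have "second_subderiv \<phi> x (g x) m \<le> Liminf sequentially (\<lambda>k. ereal (q (tk k) (mk k)))"
    using Liminf_le_seq[OF seq_lim[OF tk0 tkl mk], of "\<lambda>p. ereal (q (fst p) (snd p))"]
    by (simp add: ss_def)
  also have "\<dots> \<le> Liminf sequentially (\<lambda>k. ereal (Rk k))"
  proof (rule Liminf_mono)
    have "\<forall>\<^sub>F k in sequentially. (\<lambda>p. 0 < fst p \<and> x + fst p *\<^sub>R snd p \<in> S \<and> fst p * norm (snd p) < e) (tk k, ak k)"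
      using seq_lim[OF tk0 tkl ak] ev_good[of a] unfolding filterlim_iff by blast
    then have ea: "\<forall>\<^sub>F k in sequentially. tk k > 0 \<and> x + tk k *\<^sub>R ak k \<in> S"
      by (rule eventually_mono) auto
    have "\<forall>\<^sub>F k in sequentially. (\<lambda>p. 0 < fst p \<and> x + fst p *\<^sub>R snd p \<in> S \<and> fst p * norm (snd p) < e) (tk k, bk k)"
      using seq_lim[OF tk0 tkl bk] ev_good[of b] unfolding filterlim_iff by blast
    then have eb: "\<forall>\<^sub>F k in sequentially. tk k > 0 \<and> x + tk k *\<^sub>R bk k \<in> S"
      by (rule eventually_mono) auto
    show "\<forall>\<^sub>F k in sequentially. ereal (q (tk k) (mk k)) \<le> ereal (Rk k)"
      using ea eb
    proof eventually_elim
      case (elim k)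
      then show ?case unfolding mk_def Rk_def using sdq_conv[of "tk k" "ak k" "bk k" l] l by simp
    qed
  qed
  also have "\<dots> = ereal R"
    using Rk by (intro lim_imp_Liminf) auto
  finally show ?thesis using ss_eq[of m] by (simp add: m_def R_def)
qed

end



lemma opt_unique:
  fixes D :: "'a::euclidean_space \<Rightarrow> real" and v :: 'a
  assumes c0: "c > 0" and low: "\<And>w. c * (norm w)\<^sup>2 \<le> D w" and D0: "D 0 \<le> 0"
    and conv: "\<And>a b l. 0 \<le> l \<Longrightarrow> l \<le> 1 \<Longrightarrow>
       D (l *\<^sub>R a + (1 - l) *\<^sub>R b) \<le> l * D a + (1 - l) * D b - c * l * (1 - l) * (norm (a - b))\<^sup>2"
  shows "\<exists>!w. \<forall>w'. inner v w + D w / 2 \<le> inner v w' + D w' / 2"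
proof -
  define G where "G w = inner v w + D w / 2" for w
  have cD: "convex_on UNIV D"
  proof (rule convex_onI)
    fix t :: real and a b :: 'a assume t: "t > 0" "t < 1"
    have "D ((1 - t) *\<^sub>R a + (1 - (1 - t)) *\<^sub>R b) \<le> (1 - t) * D a + (1 - (1 - t)) * D b - c * (1 - t) * (1 - (1 - t)) * (norm (a - b))\<^sup>2"
      using t by (intro conv) auto
    moreover have "c * (1 - t) * (1 - (1 - t)) * (norm (a - b))\<^sup>2 \<ge> 0" using t c0 by simp
    ultimately show "D ((1 - t) *\<^sub>R a + t *\<^sub>R b) \<le> (1 - t) * D a + t * D b" by simp
  qed simp
  have contD: "continuous_on UNIV D" using convex_on_continuous[OF open_UNIV cD] .
  have contG: "continuous_on UNIV G" unfolding G_def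
    by (intro continuous_intros contD) auto
  define R where "R = 2 * norm v / c + 1"
  have R0: "R > 0" using c0 by (simp add: R_def add_nonneg_pos)
  obtain w0 where w0: "w0 \<in> cball 0 R" and w0m: "\<And>y. y \<in> cball 0 R \<Longrightarrow> G w0 \<le> G y"
  proof -
    have ne: "cball (0::'a) R \<noteq> {}" using R0 by simp
    show ?thesis using continuous_attains_inf[OF compact_cball ne continuous_on_subset[OF contG subset_UNIV]] that
      by blast
  qed
  have G0: "G 0 \<le> 0" using D0 by (simp add: G_def)
  have Gout: "G y > 0" if "y \<notin> cball 0 R" for y
  proof -
    have ny: "norm y > R" using that by simp
    have "- (norm v * norm y) \<le> inner v y" using norm_cauchy_schwarz[of "-v" y] by simp
    moreover have "c * (norm y)\<^sup>2 \<le> D y" by (rule low)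
    moreover have "c/2 * (norm y)\<^sup>2 > norm v * norm y"
    proof -
      have "c/2 * norm y > norm v" using ny c0 unfolding R_def by (simp add: field_simps)
      then have "(c/2 * norm y) * norm y > norm v * norm y" using ny R0
        by (intro mult_strict_right_mono) auto
      then show ?thesis by (simp add: power2_eq_square algebra_simps)
    qed
    ultimately show ?thesis unfolding G_def by linarith
  qed
  have minw0: "\<forall>w'. G w0 \<le> G w'"
  proof
    fix w' show "G w0 \<le> G w'"
    proof (cases "w' \<in> cball 0 R")
      case True then show ?thesis using w0m by blast
    next
      case False
      have "G w0 \<le> G 0" using w0m R0 by simp
      then show ?thesis using Gout[OF False] G0 by linarith
    qed
  qed
  have uniq: "w1 = w2" if m1: "\<forall>w'. G w1 \<le> G w'" and m2: "\<forall>w'. G w2 \<le> G w'" for w1 w2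
  proof (rule ccontr)
    assume ne: "w1 \<noteq> w2"
    define mid where "mid = (1/2) *\<^sub>R w1 + (1 - 1/2) *\<^sub>R w2"
    have Dm: "D mid \<le> (1/2) * D w1 + (1 - 1/2) * D w2 - c * (1/2) * (1 - 1/2) * (norm (w1 - w2))\<^sup>2"
      unfolding mid_def by (rule conv) auto
    have im: "inner v mid = (1/2) * inner v w1 + (1/2) * inner v w2"
      by (simp add: mid_def inner_add_right)
    have pos: "c * (norm (w1 - w2))\<^sup>2 > 0" using ne c0 by simp
    have eq: "G w1 = G w2" using m1 m2 by (meson order_antisym)
    have "G mid < G w1" using Dm im pos eq unfolding G_def by (simp add: field_simps)
    then show False using m1 by (meson not_le)
  qed
  show ?thesis unfolding G_def[symmetric]
    using minw0 uniq by blast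
qed



context subprob2
begin

lemma final:
  "\<exists>!w. \<forall>w'. ereal (\<phi> x + inner (g x) w) + ereal (1/2) * second_subderiv \<phi> x (g x) w
         \<le> ereal (\<phi> x + inner (g x) w') + ereal (1/2) * second_subderiv \<phi> x (g x) w'"
proof -
  have D0: "D 0 \<le> 0" using D_upper[of 0] by simp
  have ex: "\<exists>!w. \<forall>w'. inner (g x) w + D w / 2 \<le> inner (g x) w' + D w' / 2"
    by (rule opt_unique[OF c0 D_lower D0 D_conv])
  have eq: "(ereal (\<phi> x + inner (g x) w) + ereal (1/2) * second_subderiv \<phi> x (g x) w
         \<le> ereal (\<phi> x + inner (g x) w') + ereal (1/2) * second_subderiv \<phi> x (g x) w') \<longleftrightarrow>
        (inner (g x) w + D w / 2 \<le> inner (g x) w' + D w' / 2)" for w w'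
    by (simp add: ss_eq)
  show ?thesis unfolding eq by (rule ex)
qed

end



theorem theorem5p3:
  fixes \<phi> :: "real ^ 'n \<Rightarrow> real" and xb :: "real ^ 'n" and \<kappa> \<delta> :: real
  assumes "C11_near \<phi> xb"
    and "\<kappa> > 0"
    and "tilt_stable \<phi> xb \<kappa>"
    and "\<delta> > 0"
    and "\<forall>x. \<phi> differentiable (at x) \<and> (x, grad \<phi> x) \<in> cball (xb, 0) \<delta> \<longrightarrow>
           twice_epi_diff \<phi> x (grad \<phi> x)"
  shows "\<exists>\<epsilon>>0. \<forall>x\<in>ball xb \<epsilon>. \<exists>!w. \<forall>w'.
           ereal (\<phi> x + inner (grad \<phi> x) w) + ereal (1/2) * second_subderiv \<phi> x (grad \<phi> x) w
         \<le> ereal (\<phi> x + inner (grad \<phi> x) w') + ereal (1/2) * second_subderiv \<phi> x (grad \<phi> x) w'"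
proof -
  note kp = assms(2) and d0 = assms(4) and epiA = assms(5)
  obtain U where U: "open U" "xb \<in> U" and diffU: "\<And>x. x \<in> U \<Longrightarrow> \<phi> differentiable (at x)"
    and lipU: "\<And>x. x \<in> U \<Longrightarrow> \<exists>e>0. \<exists>L. L-lipschitz_on (ball x e \<inter> U) (grad \<phi>)"
    using assms(1) unfolding C11_near_def by blast
  obtain \<gamma> \<eta> where g0: "\<gamma> > 0" and e0: "\<eta> > 0"
    and sing: "\<And>v. v \<in> ball 0 \<eta> \<Longrightarrow> \<exists>x. tilt_argmin \<phi> xb \<gamma> v = {x}"
    and lipT: "\<And>v1 v2 x1 x2. v1 \<in> ball 0 \<eta> \<Longrightarrow> v2 \<in> ball 0 \<eta> \<Longrightarrow>
        tilt_argmin \<phi> xb \<gamma> v1 = {x1} \<Longrightarrow> tilt_argmin \<phi> xb \<gamma> v2 = {x2} \<Longrightarrow>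
        norm (x1 - x2) \<le> \<kappa> * norm (v1 - v2)"
    and M0': "tilt_argmin \<phi> xb \<gamma> 0 = {xb}"
    using assms(3) unfolding tilt_stable_def by metis
  define M where "M v = (THE y. tilt_argmin \<phi> xb \<gamma> v = {y})" for v
  have HM: "tilt_argmin \<phi> xb \<gamma> v = {M v}" if vb: "v \<in> ball 0 \<eta>" for v
  proof -
    obtain y where y: "tilt_argmin \<phi> xb \<gamma> v = {y}" using sing[OF vb] by blast
    have "M v = y" unfolding M_def by (rule the_equality) (use y in auto)
    then show ?thesis using y by simp
  qed
  have MC: "M v \<in> cball xb \<gamma>" if "v \<in> ball 0 \<eta>" for v
    using HM[OF that] unfolding tilt_argmin_def by blast
  have mn: "\<phi> (M v) - inner v (M v) \<le> \<phi> y - inner v y" if "v \<in> ball 0 \<eta>" "y \<in> cball xb \<gamma>" for v y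
    using HM[OF that(1)] that(2) unfolding tilt_argmin_def by blast
  have lipM: "norm (M u - M u') \<le> \<kappa> * norm (u - u')" if "u \<in> ball 0 \<eta>" "u' \<in> ball 0 \<eta>" for u u'
    using lipT[OF that HM[OF that(1)] HM[OF that(2)]] .
  have M0: "M 0 = xb" using HM[of 0] M0' e0 by simp
  obtain r where r0: "r > 0" and rU: "ball xb r \<subseteq> U" using U open_contains_ball by blast
  define r' where "r' = min r \<gamma>"
  have r'0: "r' > 0" using r0 g0 by (simp add: r'_def)
  define \<eta>1 where "\<eta>1 = min (\<eta>/3) (min (r'/\<kappa>) (\<delta>/2))"
  have \<eta>10: "\<eta>1 > 0" using e0 r'0 kp d0 by (simp add: \<eta>1_def)
  have \<eta>1b: "u \<in> ball 0 \<eta> \<and> norm u < \<eta>/3 \<and> norm u < r'/\<kappa> \<and> norm u < \<delta>/2" if "u \<in> ball 0 \<eta>1" for u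
  proof -
    have "norm u < \<eta>/3" "norm u < r'/\<kappa>" "norm u < \<delta>/2" using that by (auto simp: \<eta>1_def)
    moreover have "norm u < \<eta>" using calculation(1) norm_ge_zero[of u] by linarith
    ultimately show ?thesis by simp
  qed
  have Mball: "M u \<in> ball xb r'" if "u \<in> ball 0 \<eta>1" for u
  proof -
    have ub: "u \<in> ball 0 \<eta>" "(0::real^'n) \<in> ball 0 \<eta>" using that e0 by (auto simp: \<eta>1_def)
    have "norm (M u - xb) \<le> \<kappa> * norm u" using lipM[OF ub] M0 by simp
    also have "\<kappa> * norm u < \<kappa> * (r'/\<kappa>)" using that kp by (intro mult_strict_left_mono) (auto simp: \<eta>1_def)
    also have "\<dots> = r'" using kp by simp
    finally show ?thesis by (simp add: dist_norm norm_minus_commute)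
  qed
  have gradM: "grad \<phi> (M u) = u" if "u \<in> ball 0 \<eta>1" for u
  proof -
    have ub: "u \<in> ball 0 \<eta>" using \<eta>1b[OF that] by blast
    have MU: "M u \<in> U" using Mball[OF that] rU by (auto simp: r'_def)
    have d: "((\<lambda>y. \<phi> y - inner u y) has_derivative (\<lambda>h. inner h (grad \<phi> (M u)) - inner u h)) (at (M u))"
      by (intro has_derivative_diff grad_has_derivative diffU MU has_derivative_inner_right has_derivative_ident)
    have "eventually (\<lambda>y. y \<in> ball xb r') (at (M u))"
      by (rule eventually_at_in_open'[OF open_ball Mball[OF that]])
    then have "eventually (\<lambda>y. \<phi> (M u) - inner u (M u) \<le> \<phi> y - inner u y) (at (M u))"
      by (rule eventually_mono) (auto intro!: mn[OF ub] simp: r'_def)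
    from has_derivative_local_min[OF d this]
    have "(\<lambda>h. inner h (grad \<phi> (M u)) - inner u h) = (\<lambda>h. 0)" .
    then have "inner (grad \<phi> (M u) - u) (grad \<phi> (M u)) - inner u (grad \<phi> (M u) - u) = 0"
      by metis
    then have "inner (grad \<phi> (M u) - u) (grad \<phi> (M u) - u) = 0"
      by (simp add: inner_diff_left inner_diff_right inner_commute)
    then show ?thesis by simp
  qed
  define Oset where "Oset = M ` ball 0 \<eta>1"
  have contM: "continuous_on (ball 0 \<eta>1) M"
  proof (rule lipschitz_on_continuous_on[of \<kappa>], rule lipschitz_onI)
    fix a b assume "a \<in> ball (0::real^'n) \<eta>1" "b \<in> ball (0::real^'n) \<eta>1"
    then have "a \<in> ball 0 \<eta>" "b \<in> ball 0 \<eta>" using \<eta>1b by blast+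
    then show "dist (M a) (M b) \<le> \<kappa> * dist a b" using lipM by (simp add: dist_norm)
  qed (use kp in simp)
  have injM: "inj_on M (ball 0 \<eta>1)"
    by (rule inj_onI) (metis gradM)
  have oO: "open Oset" unfolding Oset_def by (rule invariance_of_domain[OF contM open_ball injM])
  have xbO: "xb \<in> Oset" unfolding Oset_def using M0 \<eta>10 by (metis centre_in_ball image_eqI)
  obtain \<rho>0 where \<rho>00: "\<rho>0 > 0" and \<rho>0O: "ball xb \<rho>0 \<subseteq> Oset" using oO xbO open_contains_ball by blast
  define \<rho> where "\<rho> = min \<rho>0 (\<delta>/2)"
  have \<rho>0: "\<rho> > 0" using \<rho>00 d0 by (simp add: \<rho>_def)
  define S where "S = ball xb \<rho>"
  have SO: "S \<subseteq> Oset" using \<rho>0O by (auto simp: S_def \<rho>_def)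
  have inS: "\<exists>u\<in>ball 0 \<eta>1. p = M u \<and> grad \<phi> p = u \<and> p \<in> U" if pS: "p \<in> S" for p
  proof -
    obtain u where u: "u \<in> ball 0 \<eta>1" "p = M u" using SO pS unfolding Oset_def by blast
    then show ?thesis using gradM[OF u(1)] Mball[OF u(1)] rU by (auto simp: r'_def)
  qed
  define c where "c = 1 / (2 * \<kappa>)"
  have c0: "c > 0" using kp by (simp add: c_def)
  have derS: "(\<phi> has_derivative (\<lambda>h. inner h (grad \<phi> p))) (at p)" if "p \<in> S" for p
    using inS[OF that] diffU grad_has_derivative by blast
  have monoS: "inner (grad \<phi> a - grad \<phi> b) (a - b) \<ge> c * (norm (a - b))\<^sup>2" if ab: "a \<in> S" "b \<in> S" for a b
  proof -
    obtain u where u: "u \<in> ball 0 \<eta>1" "a = M u" "grad \<phi> a = u" using inS[OF ab(1)] by blast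
    obtain u' where u': "u' \<in> ball 0 \<eta>1" "b = M u'" "grad \<phi> b = u'" using inS[OF ab(2)] by blast
    have n: "norm u < \<eta>/3" "norm u' < \<eta>/3" using \<eta>1b[OF u(1)] \<eta>1b[OF u'(1)] by blast+
    have "inner (M u - M u') (u - u') \<ge> (norm (M u - M u'))\<^sup>2 / (2*\<kappa>)"
      by (rule coco[OF kp mn MC lipM n]) auto
    then show ?thesis using u u' by (simp add: c_def inner_commute)
  qed
  show ?thesis
  proof (intro exI[of _ \<rho>] conjI \<rho>0 ballI)
    fix x assume xS': "x \<in> ball xb \<rho>"
    then have xS: "x \<in> S" by (simp add: S_def)
    obtain u where u: "u \<in> ball 0 \<eta>1" "x = M u" "grad \<phi> x = u" "x \<in> U" using inS[OF xS] by blast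
    obtain e1 L where e1: "e1 > 0" and L: "L-lipschitz_on (ball x e1 \<inter> U) (grad \<phi>)" using lipU[OF u(4)] by blast
    obtain e2 where e2: "e2 > 0" "ball x e2 \<subseteq> U" using U(1) u(4) open_contains_ball by blast
    define e where "e = min e1 e2"
    have e0': "e > 0" using e1 e2 by (simp add: e_def)
    have L0: "L \<ge> 0" using lipschitz_on_nonneg[OF L] .
    have lipx: "norm (grad \<phi> p - grad \<phi> x) \<le> L * norm (p - x)" if "p \<in> ball x e" for p
    proof -
      have "p \<in> ball x e1 \<inter> U" "x \<in> ball x e1 \<inter> U" using that e2 e1 u(4) by (auto simp: e_def)
      from lipschitz_onD[OF L this] show ?thesis by (simp add: dist_norm)
    qed
    have "(x, grad \<phi> x) \<in> cball (xb, 0) \<delta>"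
    proof -
      have "dist xb x < \<rho>" using xS' by simp
      moreover have "\<rho> \<le> \<delta>/2" by (simp add: \<rho>_def)
      ultimately have "dist xb x < \<delta>/2" by linarith
      moreover have "dist 0 (grad \<phi> x) < \<delta>/2" using \<eta>1b[OF u(1)] u(3) by simp
      ultimately have "sqrt ((dist xb x)\<^sup>2 + (dist 0 (grad \<phi> x))\<^sup>2) \<le> \<delta>"
        using sqrt_sum_squares_le_sum[of "dist xb x" "dist 0 (grad \<phi> x)"] by simp
      then show ?thesis by (simp add: dist_Pair_Pair)
    qed
    then have epi: "twice_epi_diff \<phi> x (grad \<phi> x)" using epiA diffU[OF u(4)] by blast
    interpret sp: subprob2 \<phi> "grad \<phi>" S x c L e
      using xS' by unfold_locales (auto simp: S_def derS monoS c0 e0' L0 lipx epi)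
    show "\<exists>!w. \<forall>w'.
           ereal (\<phi> x + inner (grad \<phi> x) w) + ereal (1/2) * second_subderiv \<phi> x (grad \<phi> x) w
         \<le> ereal (\<phi> x + inner (grad \<phi> x) w') + ereal (1/2) * second_subderiv \<phi> x (grad \<phi> x) w'"
      by (rule sp.final)
  qed
qed

end
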